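(* In the standing setup, for all $S,T\in\mathfrak{S}$ we have $|\mathcal{N}_{(S,T)}|\le\gcd(\mathrm{eff}(\sigma^+_S),-\mathrm{eff}(\sigma^-_T))$ (whenever $\mathcal{N}_{(S,T)}\neq\emptyset$, so that both cycles are defined).
   Context: $\mathbb{N}=\{0,1,2,\dots\}$. A one-counter system (OCS) $\mathcal{O}$ consists of a finite set $Q$ of states, a set $T_{>0}\subseteq Q\times\{-1,0,1\}\times Q$ of non-zero transitions and a set $T_{=0}\subseteq Q\times\{0,1\}\times Q$ of zero tests. A configuration is a pair $(q,c)\in Q\times\mathbb{N}$ (state $q$, counter value $c$). A transition $t=(p,d,q)$ has source $p$, target $q$, effect $d$; it can be fired in $(p,c)$ if either $t\in T_{>0}$ and $c>0$, or $t\in T_{=0}$ and $c=0$, yielding $(q,c+d)$. A path is a sequence $(\gamma_1,t_1)\cdots(\gamma_m,t_m)$ such that, with some $\gamma_{m+1}$, firing $t_i$ in $\gamma_i$ yields $\gamma_{i+1}$ for all $i\le m$; its source is $\gamma_1$, target $\gamma_{m+1}$, length $\mathrm{len}=m$, configurations appearing on it are $\gamma_1,\dots,\gamma_{m+1}$, intermediate ones are $\gamma_2,\dots,\gamma_m$; its projection is $\mathrm{proj}=t_1\cdots t_m$ and its effect $\mathrm{eff}$ is the sum of the effects of its transitions. A sequence of transitions is consistent if each transition's target is the next one's source. A cycle is a consistent sequence of non-zero transitions starting and ending in the same state (its base state); positive/negative if its effect is positive/negative; simple if no state is visited twice except the base at start and end. The transition multigraph $G$ has vertices $Q$ and an edge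 $p\to q$ labelled $d$ for each $(p,d,q)\in T_{>0}$; $\mathfrak{S}$ is the set of its SCCs and $n_S$ the number of states in $S\in\mathfrak{S}$. A cycle is contained in $S$ if all its states lie in $S$; $S$ is positively (negatively) enabled if it contains a positive (negative) cycle. For every positively enabled $S$ a simple positive cycle $\sigma^+_S$ contained in $S$ is fixed, and for every negatively enabled $T$ a simple negative cycle $\sigma^-_T$ contained in $T$. An arc is a path whose source and target have counter value $0$ and whose intermediate configurations have positive counter value. A path is low if all configurations appearing on it have counter value $<5n$, where $n=|Q|$. For $S,T\in\mathfrak{S}$, an arc $\rho$ is $(S,T)$-normal if $\rho=\rho_{\mathrm{pref}}\rho_{\mathrm{up}}\rho_{\mathrm{cap}}\rho_{\mathrm{down}}\rho_{\mathrm{suff}}$ (normal decomposition) with $\rho_{\mathrm{pref}},\rho_{\mathrm{suff}}$ low, $\mathrm{proj}(\rho_{\mathrm{up}})=(\sigma^+_S)^a$, $\mathrm{proj}(\rho_{\mathrm{down}})=(\sigma^-_T)^b$ for some $a,b\in\mathbb{N}$, the source of $\rho_{\mathrm{cap}}$ having the base state of $\sigma^+_S$ and its target the base state of $\sigma^-_T$. Writing $A=\mathrm{eff}(\sigma^+_S)$, $B=-\mathrm{eff}(\sigma^-_T)$, such a decomposition is good if: (iii) $aA\le 2\,\mathrm{len}(\rho_{\mathrm{cap}})+2\,\mathrm{lcm}(A,B)$; (iv) $bB\le 2\,\mathrm{len}(\rho_{\mathrm{cap}})+2\,\mathrm{lcm}(A,B)$; (v) no infix of $\mathrm{proj}(\rho_{\mathrm{cap}})$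 is a cycle with effect divisible by $\gcd(A,B)$; (vi) the target of $\rho_{\mathrm{up}}$ and the source of $\rho_{\mathrm{down}}$ have counter values $>n$; (vii) all configurations appearing on $\rho_{\mathrm{pref}}$ and $\rho_{\mathrm{suff}}$ together are pairwise distinct. Standing setup: $\alpha,\beta$ are configurations with counter value $0$; $\rho=\rho^1\rho^2\cdots\rho^k$ is a path from $\alpha$ to $\beta$ that has the minimum possible number of appearing configurations with counter value $0$ among all paths from $\alpha$ to $\beta$; each $\rho^i$ is an arc; $\{1,\dots,k\}=\mathcal{L}\sqcup\mathcal{N}$ where for $i\in\mathcal{L}$, $\rho^i$ is a low arc of minimum length among all low arcs with the same source and target, and for $i\in\mathcal{N}$, $\rho^i$ is $(S_i,T_i)$-normal for some $S_i,T_i\in\mathfrak{S}$ with a fixed good normal decomposition $\rho^i=\rho^i_{\mathrm{pref}}\rho^i_{\mathrm{up}}\rho^i_{\mathrm{cap}}\rho^i_{\mathrm{down}}\rho^i_{\mathrm{suff}}$. For $S,T\in\mathfrak{S}$: $\mathcal{N}_{(S,T)}=\{i\in\mathcal{N}: (S_i,T_i)=(S,T)\}$, $\mathcal{N}_{(S,\cdot)}=\{i\in\mathcal{N}:S_i=S\}$, $\mathcal{N}_{(\cdot,T)}=\{i\in\mathcal{N}:T_i=T\}$. *)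

theory Defs
  imports Main
begin

type_synonym 'q trans = "'q \<times> int \<times> 'q"
type_synonym 'q conf = "'q \<times> nat"
text \<open>A path is represented by its source configuration and its projection
  (the sequence of fired transitions); all appearing configurations are determined.\<close>
type_synonym 'q path = "'q conf \<times> 'q trans list"

record 'q ocs =
  states :: "'q set"
  tpos :: "'q trans set"
  tzero :: "'q trans set"

definition wf_ocs :: "'q ocs \<Rightarrow> bool" where
  "wf_ocs M \<longleftrightarrow> finite (states M)
     \<and> tpos M \<subseteq> states M \<times> {-1,0,1} \<times> states M
     \<and> tzero M \<subseteq> states M \<times> {0,1} \<times> states M"

definition src :: "'q trans \<Rightarrow> 'q" where "src t = fst t"
definition eff_t :: "'q trans \<Rightarrow> int" where "eff_t t = fst (snd t)"
definition tgt :: "'q trans \<Rightarrow> 'q" where "tgt t = snd (snd t)"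

definition fire :: "'q ocs \<Rightarrow> 'q conf \<Rightarrow> 'q trans \<Rightarrow> 'q conf option" where
  "fire M c t = (if src t = fst c \<and> ((t \<in> tpos M \<and> snd c > 0) \<or> (t \<in> tzero M \<and> snd c = 0))
                 then Some (tgt t, nat (int (snd c) + eff_t t)) else None)"

fun run :: "'q ocs \<Rightarrow> 'q conf \<Rightarrow> 'q trans list \<Rightarrow> 'q conf option" where
  "run M c [] = Some c"
| "run M c (t # ts) = (case fire M c t of None \<Rightarrow> None | Some c' \<Rightarrow> run M c' ts)"

fun confs :: "'q ocs \<Rightarrow> 'q conf \<Rightarrow> 'q trans list \<Rightarrow> 'q conf list" where
  "confs M c [] = [c]"
| "confs M c (t # ts) = c # (case fire M c t of None \<Rightarrow> [] | Some c' \<Rightarrow> confs M c' ts)"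

definition is_path :: "'q ocs \<Rightarrow> 'q path \<Rightarrow> bool" where
  "is_path M \<rho> \<longleftrightarrow> run M (fst \<rho>) (snd \<rho>) \<noteq> None"

definition source :: "'q path \<Rightarrow> 'q conf" where "source \<rho> = fst \<rho>"
definition target :: "'q ocs \<Rightarrow> 'q path \<Rightarrow> 'q conf" where
  "target M \<rho> = the (run M (fst \<rho>) (snd \<rho>))"
definition len :: "'q path \<Rightarrow> nat" where "len \<rho> = length (snd \<rho>)"

definition configs :: "'q ocs \<Rightarrow> 'q path \<Rightarrow> 'q conf list" where
  "configs M \<rho> = confs M (fst \<rho>) (snd \<rho>)"
definition inter_configs :: "'q ocs \<Rightarrow> 'q path \<Rightarrow> 'q conf list" where
  "inter_configs M \<rho> = butlast (tl (configs M \<rho>))"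

definition eff :: "'q trans list \<Rightarrow> int" where
  "eff ts = sum_list (map eff_t ts)"

fun chain :: "'q ocs \<Rightarrow> 'q conf \<Rightarrow> 'q path list \<Rightarrow> bool" where
  "chain M c [] = True"
| "chain M c (r # rs) = (is_path M r \<and> fst r = c \<and> chain M (target M r) rs)"

definition is_concat :: "'q ocs \<Rightarrow> 'q path \<Rightarrow> 'q path list \<Rightarrow> bool" where
  "is_concat M \<rho> rs \<longleftrightarrow> chain M (fst \<rho>) rs \<and> snd \<rho> = concat (map snd rs)"

fun consistent :: "'q trans list \<Rightarrow> bool" where
  "consistent [] = True"
| "consistent [t] = True"
| "consistent (t # u # ts) = (tgt t = src u \<and> consistent (u # ts))"

definition is_cycle :: "'q ocs \<Rightarrow> 'q trans list \<Rightarrow> bool" where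
  "is_cycle M ts \<longleftrightarrow> ts \<noteq> [] \<and> set ts \<subseteq> tpos M \<and> consistent ts
      \<and> src (hd ts) = tgt (last ts)"

definition base :: "'q trans list \<Rightarrow> 'q" where "base ts = src (hd ts)"

definition simple_cycle :: "'q ocs \<Rightarrow> 'q trans list \<Rightarrow> bool" where
  "simple_cycle M ts \<longleftrightarrow> is_cycle M ts \<and> distinct (map src ts)"

definition contained :: "'q trans list \<Rightarrow> 'q set \<Rightarrow> bool" where
  "contained ts S \<longleftrightarrow> (\<forall>t\<in>set ts. src t \<in> S \<and> tgt t \<in> S)"

definition edges :: "'q ocs \<Rightarrow> ('q \<times> 'q) set" where
  "edges M = {(src t, tgt t) | t. t \<in> tpos M}"

definition sccs :: "'q ocs \<Rightarrow> 'q set set" where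
  "sccs M = {S. \<exists>q\<in>states M. S = {p \<in> states M. (p, q) \<in> (edges M)\<^sup>* \<and> (q, p) \<in> (edges M)\<^sup>*}}"

definition pos_enabled :: "'q ocs \<Rightarrow> 'q set \<Rightarrow> bool" where
  "pos_enabled M S \<longleftrightarrow> (\<exists>ts. is_cycle M ts \<and> contained ts S \<and> eff ts > 0)"
definition neg_enabled :: "'q ocs \<Rightarrow> 'q set \<Rightarrow> bool" where
  "neg_enabled M S \<longleftrightarrow> (\<exists>ts. is_cycle M ts \<and> contained ts S \<and> eff ts < 0)"

definition fixed_cycles :: "'q ocs \<Rightarrow> ('q set \<Rightarrow> 'q trans list) \<Rightarrow> ('q set \<Rightarrow> 'q trans list) \<Rightarrow> bool" where
  "fixed_cycles M sp sn \<longleftrightarrow>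
     (\<forall>S\<in>sccs M. pos_enabled M S \<longrightarrow> simple_cycle M (sp S) \<and> contained (sp S) S \<and> eff (sp S) > 0)
   \<and> (\<forall>T\<in>sccs M. neg_enabled M T \<longrightarrow> simple_cycle M (sn T) \<and> contained (sn T) T \<and> eff (sn T) < 0)"

definition is_arc :: "'q ocs \<Rightarrow> 'q path \<Rightarrow> bool" where
  "is_arc M \<rho> \<longleftrightarrow> is_path M \<rho> \<and> snd (source \<rho>) = 0 \<and> snd (target M \<rho>) = 0
     \<and> (\<forall>c\<in>set (inter_configs M \<rho>). snd c > 0)"

definition is_low :: "'q ocs \<Rightarrow> 'q path \<Rightarrow> bool" where
  "is_low M \<rho> \<longleftrightarrow> (\<forall>c\<in>set (configs M \<rho>). snd c < 5 * card (states M))"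

definition min_low_arc :: "'q ocs \<Rightarrow> 'q path \<Rightarrow> bool" where
  "min_low_arc M \<rho> \<longleftrightarrow> is_arc M \<rho> \<and> is_low M \<rho> \<and>
     (\<forall>\<rho>'. is_arc M \<rho>' \<and> is_low M \<rho>' \<and> source \<rho>' = source \<rho> \<and> target M \<rho>' = target M \<rho>
            \<longrightarrow> len \<rho> \<le> len \<rho>')"

definition good_normal_decomp ::
  "'q ocs \<Rightarrow> ('q set \<Rightarrow> 'q trans list) \<Rightarrow> ('q set \<Rightarrow> 'q trans list) \<Rightarrow> 'q set \<Rightarrow> 'q set
   \<Rightarrow> 'q path \<Rightarrow> 'q path \<Rightarrow> 'q path \<Rightarrow> 'q path \<Rightarrow> 'q path \<Rightarrow> 'q path \<Rightarrow> nat \<Rightarrow> nat \<Rightarrow> bool" where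
  "good_normal_decomp M sp sn S T \<rho> pre up cap down suf a b \<longleftrightarrow>
     (let n = card (states M); A = eff (sp S); B = - eff (sn T) in
     is_concat M \<rho> [pre, up, cap, down, suf]
     \<and> is_low M pre \<and> is_low M suf
     \<and> snd up = concat (replicate a (sp S))
     \<and> snd down = concat (replicate b (sn T))
     \<and> fst (source cap) = base (sp S)
     \<and> fst (target M cap) = base (sn T)
     \<and> int a * A \<le> 2 * int (len cap) + 2 * lcm A B
     \<and> int b * B \<le> 2 * int (len cap) + 2 * lcm A B
     \<and> (\<forall>xs ys zs. snd cap = xs @ ys @ zs \<and> is_cycle M ys \<longrightarrow> \<not> (gcd A B dvd eff ys))
     \<and> snd (target M up) > n \<and> snd (source down) > n
     \<and> distinct (configs M pre @ configs M suf))"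

definition good_normal_arc ::
  "'q ocs \<Rightarrow> ('q set \<Rightarrow> 'q trans list) \<Rightarrow> ('q set \<Rightarrow> 'q trans list) \<Rightarrow> 'q set \<Rightarrow> 'q set
   \<Rightarrow> 'q path \<Rightarrow> bool" where
  "good_normal_arc M sp sn S T \<rho> \<longleftrightarrow> is_arc M \<rho> \<and> S \<in> sccs M \<and> T \<in> sccs M
     \<and> pos_enabled M S \<and> neg_enabled M T
     \<and> (\<exists>pre up cap down suf a b. good_normal_decomp M sp sn S T \<rho> pre up cap down suf a b)"

definition zeros :: "'q ocs \<Rightarrow> 'q path \<Rightarrow> nat" where
  "zeros M \<rho> = length (filter (\<lambda>c. snd c = 0) (configs M \<rho>))"

definition standing_setup ::
  "'q ocs \<Rightarrow> ('q set \<Rightarrow> 'q trans list) \<Rightarrow> ('q set \<Rightarrow> 'q trans list)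
   \<Rightarrow> 'q conf \<Rightarrow> 'q conf \<Rightarrow> 'q path \<Rightarrow> 'q path list \<Rightarrow> nat set \<Rightarrow> nat set
   \<Rightarrow> (nat \<Rightarrow> 'q set) \<Rightarrow> (nat \<Rightarrow> 'q set) \<Rightarrow> bool" where
  "standing_setup M sp sn \<alpha> \<beta> \<rho> rs L N Si Ti \<longleftrightarrow>
     wf_ocs M \<and> fixed_cycles M sp sn
     \<and> snd \<alpha> = 0 \<and> snd \<beta> = 0
     \<and> is_path M \<rho> \<and> source \<rho> = \<alpha> \<and> target M \<rho> = \<beta>
     \<and> (\<forall>\<rho>'. is_path M \<rho>' \<and> source \<rho>' = \<alpha> \<and> target M \<rho>' = \<beta> \<longrightarrow> zeros M \<rho> \<le> zeros M \<rho>')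
     \<and> is_concat M \<rho> rs
     \<and> (\<forall>i<length rs. is_arc M (rs ! i))
     \<and> L \<union> N = {..<length rs} \<and> L \<inter> N = {}
     \<and> (\<forall>i\<in>L. min_low_arc M (rs ! i))
     \<and> (\<forall>i\<in>N. good_normal_arc M sp sn (Si i) (Ti i) (rs ! i))"

end

theory Submission
  imports Defs
begin

lemma run_append: "run M c (xs@ys) = (case run M c xs of None \<Rightarrow> None | Some c' \<Rightarrow> run M c' ys)"
  by (induction xs arbitrary: c) (auto split: option.splits)

lemma run_app_Some: "run M c xs = Some c' \<Longrightarrow> run M c (xs@ys) = run M c' ys"
  by (simp add: run_append)

lemma confs_hd: "confs M c ts = c # tl (confs M c ts)"
  by (cases ts) auto

lemma confs_append: "run M c xs = Some c' \<Longrightarrow> confs M c (xs@ys) = confs M c xs @ tl (confs M c' ys)"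
proof (induction xs arbitrary: c)
  case Nil
  then show ?case by (metis append_Cons append_Nil confs.simps(1) option.inject run.simps(1) confs_hd)
next
  case (Cons t xs)
  then show ?case by (auto split: option.splits)
qed

lemma confs_ne[simp]: "confs M c ts \<noteq> []"
  by (cases ts) auto

lemma confs_last: "run M c ts = Some c' \<Longrightarrow> last (confs M c ts) = c'"
proof (induction ts arbitrary: c)
  case Nil then show ?case by simp
next
  case (Cons t ts)
  then show ?case by (auto split: option.splits)
qed

definition Z :: "'q ocs \<Rightarrow> 'q conf \<Rightarrow> 'q trans list \<Rightarrow> nat" where
  "Z M c ts = length (filter (\<lambda>x. snd x = 0) (tl (confs M c ts)))"

lemma Z_append: "run M c xs = Some c' \<Longrightarrow> Z M c (xs@ys) = Z M c xs + Z M c' ys"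
  unfolding Z_def using confs_append[of M c xs c' ys]
  by (metis filter_append length_append list.sel(3) tl_append2 confs_hd list.distinct(1))

lemma zeros_Z: "zeros M (c, ts) = (if snd c = 0 then 1 else 0) + Z M c ts"
  unfolding zeros_def Z_def configs_def by (subst confs_hd) simp

lemma Z_zero: "\<forall>x\<in>set (confs M c ts). snd x > 0 \<Longrightarrow> Z M c ts = 0"
  unfolding Z_def by (subst (asm) confs_hd) (auto simp: filter_empty_conv)

lemma Z_pos: "run M c ts = Some c' \<Longrightarrow> snd c' = 0 \<Longrightarrow> snd c > 0 \<Longrightarrow> Z M c ts \<ge> 1"
proof (cases ts)
  case Nil
  then show "run M c ts = Some c' \<Longrightarrow> snd c' = 0 \<Longrightarrow> snd c > 0 \<Longrightarrow> Z M c ts \<ge> 1" by simp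
next
  case (Cons t ts')
  assume r: "run M c ts = Some c'" and z: "snd c' = 0" 
  obtain c1 where f: "fire M c t = Some c1" and r1: "run M c1 ts' = Some c'"
    using r Cons by (auto split: option.splits)
  have "last (confs M c1 ts') = c'" using confs_last[OF r1] .
  then have "c' \<in> set (confs M c1 ts')" by (metis last_in_set confs_hd list.distinct(1))
  then have "filter (\<lambda>x. snd x = 0) (confs M c1 ts') \<noteq> []" using z by (auto simp: filter_empty_conv)
  then show ?thesis using Cons f unfolding Z_def by (cases "filter (\<lambda>x. snd x = 0) (confs M c1 ts')") auto
qed

lemma path_run: "is_path M p \<Longrightarrow> run M (fst p) (snd p) = Some (target M p)"
  unfolding is_path_def target_def by auto

fun cend :: "'q ocs \<Rightarrow> 'q conf \<Rightarrow> 'q path list \<Rightarrow> 'q conf" where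
  "cend M c [] = c" | "cend M c (r#rs) = cend M (target M r) rs"

lemma chain_app: "chain M c (xs@ys) \<longleftrightarrow> chain M c xs \<and> chain M (cend M c xs) ys"
  by (induction xs arbitrary: c) auto

lemma cend_app: "cend M c (xs@ys) = cend M (cend M c xs) ys"
  by (induction xs arbitrary: c) auto

lemma chain_run: "chain M c rs \<Longrightarrow> run M c (concat (map snd rs)) = Some (cend M c rs)"
  by (induction rs arbitrary: c) (auto simp: run_append path_run)

lemma pos_prefix: "\<forall>x\<in>set (butlast (A@B)). P x \<Longrightarrow> (A \<noteq> [] \<Longrightarrow> P (last A)) \<Longrightarrow> \<forall>x\<in>set A. P x"
proof (cases "B = []")
  case True
  assume h: "\<forall>x\<in>set (butlast (A@B)). P x" "A \<noteq> [] \<Longrightarrow> P (last A)"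
  show ?thesis
  proof
    fix x assume x: "x \<in> set A"
    then have "A = butlast A @ [last A]" by (metis append_butlast_last_id empty_iff empty_set)
    then have "x \<in> set (butlast A) \<or> x = last A" using x by (metis rotate1.simps(2) set_ConsD set_rotate1)
    moreover have "A \<noteq> []" using x by auto
    then have "P (last A)" using h(2) by blast
    ultimately show "P x" using h(1) True by auto
  qed
next
  case False
  assume h: "\<forall>x\<in>set (butlast (A@B)). P x"
  then show ?thesis using False by (simp add: butlast_append)
qed

lemma Z_prefix:
  assumes "is_arc M r" "snd r = xs @ ys" "run M (fst r) xs = Some c'" "snd c' > 0"
  shows "\<forall>x\<in>set (tl (confs M (fst r) xs)). snd x > 0"
proof -
  have ca: "confs M (fst r) (snd r) = confs M (fst r) xs @ tl (confs M c' ys)"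
    using assms(2,3) confs_append by metis
  have "\<forall>x\<in>set (butlast (tl (confs M (fst r) (snd r)))). snd x > 0"
    using assms(1) unfolding is_arc_def inter_configs_def configs_def by auto
  then have h: "\<forall>x\<in>set (butlast (tl (confs M (fst r) xs) @ tl (confs M c' ys))). snd x > 0"
    using ca by (metis tl_append2 confs_hd list.distinct(1))
  show ?thesis
  proof (rule pos_prefix[OF h])
    assume "tl (confs M (fst r) xs) \<noteq> []"
    then have "last (tl (confs M (fst r) xs)) = c'" using confs_last[OF assms(3)]
      by (metis last_tl)
    then show "snd (last (tl (confs M (fst r) xs))) > 0" using assms(4) by simp
  qed
qed


lemma eff_cons[simp]: "eff (t#ts) = eff_t t + eff ts" and eff_nil[simp]: "eff [] = 0"
  unfolding eff_def by auto

lemma eff_app[simp]: "eff (xs@ys) = eff xs + eff ys"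
  unfolding eff_def by auto

lemma wf_eff: "wf_ocs M \<Longrightarrow> t \<in> tpos M \<Longrightarrow> eff_t t \<ge> -1"
  unfolding wf_ocs_def eff_t_def by auto

lemma consistent_tl: "consistent (t#ts) \<Longrightarrow> consistent ts"
  by (cases ts) auto

lemma consistent_hd: "consistent (t#ts) \<Longrightarrow> ts \<noteq> [] \<Longrightarrow> src (hd ts) = tgt t"
  by (cases ts) auto

lemma run_tpos:
  "wf_ocs M \<Longrightarrow> consistent ts \<Longrightarrow> set ts \<subseteq> tpos M \<Longrightarrow> (ts \<noteq> [] \<longrightarrow> src (hd ts) = q)
   \<Longrightarrow> length ts < c \<Longrightarrow> run M (q,c) ts = Some (if ts = [] then q else tgt (last ts), nat (int c + eff ts))
      \<and> (\<forall>x\<in>set (confs M (q,c) ts). snd x > 0)"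
proof (induction ts arbitrary: q c)
  case Nil
  then show ?case by simp
next
  case (Cons t ts)
  have "t \<in> tpos M" using Cons.prems(3) by simp
  then have e: "eff_t t \<ge> -1" using wf_eff Cons.prems(1) by blast
  have f: "fire M (q,c) t = Some (tgt t, nat (int c + eff_t t))"
    using Cons unfolding fire_def by auto
  define c' where "c' = nat (int c + eff_t t)"
  have c': "int c' = int c + eff_t t" using e Cons.prems(5) unfolding c'_def by auto
  have "run M (tgt t, c') ts = Some (if ts = [] then tgt t else tgt (last ts), nat (int c' + eff ts))
      \<and> (\<forall>x\<in>set (confs M (tgt t,c') ts). snd x > 0)"
  proof -
    have ct: "consistent ts" by (rule consistent_tl[OF Cons.prems(2)])
    have sh: "ts \<noteq> [] \<longrightarrow> src (hd ts) = tgt t" using consistent_hd[OF Cons.prems(2)] by blast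
    show ?thesis apply (rule Cons.IH) using ct sh Cons.prems c' e by auto
  qed
  then show ?case using f c' Cons.prems(5) unfolding c'_def[symmetric] by (auto simp: add.assoc)
qed

lemma simple_len: "wf_ocs M \<Longrightarrow> simple_cycle M s \<Longrightarrow> length s \<le> card (states M)"
proof -
  assume w: "wf_ocs M" and s: "simple_cycle M s"
  have "set (map src s) \<subseteq> states M" using w s unfolding wf_ocs_def simple_cycle_def is_cycle_def src_def
    by auto
  moreover have "finite (states M)" using w unfolding wf_ocs_def by auto
  ultimately have "card (set (map src s)) \<le> card (states M)" by (simp add: card_mono)
  moreover have "distinct (map src s)" using s unfolding simple_cycle_def by simp
  then have "card (set (map src s)) = length (map src s)" by (rule distinct_card)
  ultimately show ?thesis by simp
qed

lemma cyc_once: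
  assumes "wf_ocs M" "simple_cycle M s" "base s = q" "card (states M) < c"
  shows "run M (q,c) s = Some (q, nat (int c + eff s)) \<and> (\<forall>x\<in>set (confs M (q,c) s). snd x > 0)"
proof -
  have l: "length s < c" using simple_len[OF assms(1,2)] assms(4) by simp
  have "s \<noteq> []" "tgt (last s) = q" using assms(2,3) unfolding simple_cycle_def is_cycle_def base_def by auto
  then show ?thesis using run_tpos[OF assms(1) _ _ _ l, of q] assms(2,3)
    unfolding simple_cycle_def is_cycle_def base_def by auto
qed

lemma cyc_iter:
  assumes "wf_ocs M" "simple_cycle M s" "base s = q"
  shows "(\<forall>k\<le>m. int c + int k * eff s > int (card (states M))) \<Longrightarrow>
     run M (q,c) (concat (replicate m s)) = Some (q, nat (int c + int m * eff s))
     \<and> (\<forall>x\<in>set (confs M (q,c) (concat (replicate m s))). snd x > 0)"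
proof (induction m arbitrary: c)
  case 0
  then show ?case by auto
next
  case (Suc m)
  have c0: "card (states M) < c" using Suc.prems[rule_format, of 0] by simp
  have c1: "int c + eff s > int (card (states M))" using Suc.prems[rule_format, of 1] by simp
  define c' where "c' = nat (int c + eff s)"
  have ic': "int c' = int c + eff s" using c1 unfolding c'_def by simp
  have o: "run M (q,c) s = Some (q, c') \<and> (\<forall>x\<in>set (confs M (q,c) s). snd x > 0)"
    using cyc_once[OF assms c0] unfolding c'_def by simp
  have "\<forall>k\<le>m. int c' + int k * eff s > int (card (states M))"
  proof (intro allI impI)
    fix k assume "k \<le> m"
    then have "Suc k \<le> Suc m" by simp
    with Suc.prems have "int c + int (Suc k) * eff s > int (card (states M))" by blast
    then show "int c' + int k * eff s > int (card (states M))" using ic' by (simp add: algebra_simps)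
  qed
  from Suc.IH[OF this] have ih: "run M (q, c') (concat (replicate m s)) = Some (q, nat (int c' + int m * eff s))
     \<and> (\<forall>x\<in>set (confs M (q, c') (concat (replicate m s))). snd x > 0)" .
  have "concat (replicate (Suc m) s) = s @ concat (replicate m s)" by simp
  moreover have "int c' + int m * eff s = int c + int (Suc m) * eff s" using ic' by (simp add: algebra_simps)
  moreover have "\<forall>x\<in>set (tl (confs M (q,c') (concat (replicate m s)))). snd x > 0"
    using ih by (meson list.set_sel(2) confs_ne)
  ultimately show ?case using o ih confs_append[of M "(q,c)" s "(q,c')" "concat (replicate m s)"]
    by (auto simp: run_append)
qed

lemma run_shift:
  "wf_ocs M \<Longrightarrow> run M c ts = Some c' \<Longrightarrow> (\<forall>x\<in>set (confs M c ts). snd x > 0) \<Longrightarrow>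
   run M (fst c, snd c + d) ts = Some (fst c', snd c' + d) \<and> (\<forall>x\<in>set (confs M (fst c, snd c + d) ts). snd x > 0)"
proof (induction ts arbitrary: c)
  case Nil
  then show ?case by auto
next
  case (Cons t ts)
  obtain c1 where f: "fire M c t = Some c1" and r1: "run M c1 ts = Some c'"
    using Cons.prems by (auto split: option.splits)
  have pos: "snd c > 0" using Cons.prems(3) by simp
  have tp: "t \<in> tpos M" and st: "src t = fst c" and c1: "c1 = (tgt t, nat (int (snd c) + eff_t t))"
    using f pos unfolding fire_def by (auto split: if_splits)
  have e: "eff_t t \<ge> -1" using wf_eff[OF Cons.prems(1) tp] .
  have f2: "fire M (fst c, snd c + d) t = Some (fst c1, snd c1 + d)"
    using tp st c1 e pos unfolding fire_def by auto
  have "\<forall>x\<in>set (confs M c1 ts). snd x > 0" using Cons.prems(3) f by auto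
  from Cons.IH[OF Cons.prems(1) r1 this] f2 pos show ?case by simp
qed


lemma Z_zero_tl: "\<forall>x\<in>set (tl (confs M c ts)). snd x > 0 \<Longrightarrow> Z M c ts = 0"
  unfolding Z_def by (auto simp: filter_empty_conv)

lemma bez:
  fixes A B D K :: int
  assumes "A > 0" "B > 0" "gcd A B dvd D"
  shows "\<exists>x y::nat. int x * A - int y * B = D \<and> K \<le> int x"
proof -
  obtain u v where uv: "u*A + v*B = gcd A B" using bezout_int by blast
  obtain m where m: "D = gcd A B * m" using assms(3) by (auto elim: dvdE)
  define t where "t = \<bar>u*m\<bar> + \<bar>v*m\<bar> + \<bar>K\<bar>"
  define x where "x = u*m + t*B"
  define y where "y = -v*m + t*A"
  have t0: "t \<ge> 0" unfolding t_def by simp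
  have "t*B \<ge> t" using t0 assms(2) by (simp add: mult_le_cancel_left1)
  moreover have "t*A \<ge> t" using t0 assms(1) by (simp add: mult_le_cancel_left1)
  moreover have "t = \<bar>u*m\<bar> + \<bar>v*m\<bar> + \<bar>K\<bar>" by (rule t_def)
  moreover note abs_ge_minus_self[of "u*m"] abs_ge_self[of "v*m"] abs_ge_zero[of "u*m"] abs_ge_zero[of "v*m"]
  ultimately have x0: "x \<ge> \<bar>K\<bar>" and y0: "y \<ge> 0" unfolding x_def y_def by linarith+
  have "x*A - y*B = m * (u*A + v*B)" unfolding x_def y_def by (simp add: algebra_simps)
  then have e: "x*A - y*B = D" using uv m by (simp add: mult.commute)
  show ?thesis
    apply (rule exI[of _ "nat x"], rule exI[of _ "nat y"])
    using x0 y0 e by auto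
qed


lemma split2: "i < j \<Longrightarrow> j < length rs \<Longrightarrow>
  rs = take i rs @ rs!i # take (j - Suc i) (drop (Suc i) rs) @ rs!j # drop (Suc j) rs"
proof -
  assume a: "i < j" "j < length rs"
  have 1: "rs = take i rs @ rs!i # drop (Suc i) rs" using a id_take_nth_drop by (metis order.strict_trans)
  have l: "j - Suc i < length (drop (Suc i) rs)" using a by auto
  have 2: "drop (Suc i) rs = take (j - Suc i) (drop (Suc i) rs) @ (drop (Suc i) rs)!(j - Suc i)
     # drop (Suc (j - Suc i)) (drop (Suc i) rs)" using id_take_nth_drop[OF l] .
  have 3: "(drop (Suc i) rs)!(j - Suc i) = rs!j" using a by auto
  have 4: "drop (Suc (j - Suc i)) (drop (Suc i) rs) = drop (Suc j) rs" using a by auto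
  show ?thesis using 1 2 3 4 by metis
qed

lemma core:
  assumes st: "standing_setup M sp sn \<alpha> \<beta> \<rho> rs L N Si Ti"
  and ij: "i < j" "i \<in> N" "j \<in> N" "Si i = S" "Si j = S" "Ti i = T" "Ti j = T"
  and di: "good_normal_decomp M sp sn S T (rs!i) pi ui ci di si ai bi"
  and dj: "good_normal_decomp M sp sn S T (rs!j) pj uj cj dj sj aj bj"
  and md: "gcd (eff (sp S)) (- eff (sn T)) dvd (int (snd (target M uj)) - int (snd (target M ui)))"
  shows False
proof -
  define n where "n = card (states M)"
  define A where "A = eff (sp S)"
  define B where "B = - eff (sn T)"
  define ri where "ri = rs!i"
  define rj where "rj = rs!j"
  define qS where "qS = base (sp S)"
  define qT where "qT = base (sn T)"
  have wf: "wf_ocs M" and fc: "fixed_cycles M sp sn" and a0: "snd \<alpha> = 0"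
    and pth: "is_path M \<rho>" and srcr: "source \<rho> = \<alpha>" and tgtr: "target M \<rho> = \<beta>"
    and mini: "\<And>\<rho>'. is_path M \<rho>' \<Longrightarrow> source \<rho>' = \<alpha> \<Longrightarrow> target M \<rho>' = \<beta> \<Longrightarrow> zeros M \<rho> \<le> zeros M \<rho>'"
    and cc: "is_concat M \<rho> rs" and LN: "L \<union> N = {..<length rs}"
    and gna: "\<And>k. k \<in> N \<Longrightarrow> good_normal_arc M sp sn (Si k) (Ti k) (rs ! k)"
    using st unfolding standing_setup_def by auto
  have jl: "j < length rs" using LN ij(3) by auto
  have gi: "good_normal_arc M sp sn S T ri" using gna[OF ij(2)] ij unfolding ri_def by simp
  have gj: "good_normal_arc M sp sn S T rj" using gna[OF ij(3)] ij unfolding rj_def by simp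
  have arci: "is_arc M ri" and Ss: "S \<in> sccs M" and Ts: "T \<in> sccs M" and pe: "pos_enabled M S"
    and ne: "neg_enabled M T" using gi unfolding good_normal_arc_def by auto
  have arcj: "is_arc M rj" using gj unfolding good_normal_arc_def by auto
  have scS: "simple_cycle M (sp S)" and A0: "A > 0" and scT: "simple_cycle M (sn T)" and B0: "B > 0"
    using fc Ss Ts pe ne unfolding fixed_cycles_def A_def B_def by auto
  have ci: "chain M (fst ri) [pi,ui,ci,di,si]" and sri: "snd ri = snd pi @ snd ui @ snd ci @ snd di @ snd si"
    and bci: "fst (source ci) = qS" and ui_n: "snd (target M ui) > n"
    using di unfolding good_normal_decomp_def Let_def is_concat_def ri_def qS_def n_def by auto
  have pi_p: "is_path M pi" "fst pi = fst ri" and ui_p: "is_path M ui" "fst ui = target M pi"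
    and ci_p: "is_path M ci" "fst ci = target M ui" and di_p: "is_path M di" "fst di = target M ci"
    and si_p: "is_path M si" "fst si = target M di" using ci by auto
  have run_pui: "run M (fst ri) (snd pi @ snd ui) = Some (target M ui)"
    using run_app_Some[OF path_run[OF pi_p(1)], of "snd ui"] path_run[OF ui_p(1)] pi_p(2) ui_p(2) by simp
  have run_resti: "run M (target M ui) (snd ci @ snd di @ snd si) = Some (target M si)"
    using run_app_Some[OF path_run[OF ci_p(1)], of "snd di @ snd si"]
      run_app_Some[OF path_run[OF di_p(1)], of "snd si"] path_run[OF si_p(1)] ci_p(2) di_p(2) si_p(2) by simp
  have run_ri: "run M (fst ri) (snd ri) = Some (target M si)"
    using run_app_Some[OF run_pui, of "snd ci @ snd di @ snd si"] run_resti sri by simp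
  have tri: "target M ri = target M si" using run_ri unfolding target_def by simp
  have tri0: "snd (target M ri) = 0" using arci unfolding is_arc_def by simp
  have Zpui: "Z M (fst ri) (snd pi @ snd ui) = 0"
    apply (rule Z_zero_tl, rule Z_prefix[OF arci _ run_pui])
    using sri ui_n by auto
  have Zri: "Z M (fst ri) (snd ri) \<ge> 1"
  proof -
    have "Z M (fst ri) (snd ri) = Z M (fst ri) (snd pi @ snd ui) + Z M (target M ui) (snd ci @ snd di @ snd si)"
      using sri Z_append[OF run_pui] by simp
    moreover have "Z M (target M ui) (snd ci @ snd di @ snd si) \<ge> 1"
      using Z_pos[OF run_resti] tri tri0 ui_n by simp
    ultimately show ?thesis by simp
  qed
  have tui: "target M ui = (qS, snd (target M ui))" using bci ci_p unfolding source_def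
    by (metis prod.collapse)
  have cj: "chain M (fst rj) [pj,uj,cj,dj,sj]" and srj: "snd rj = snd pj @ snd uj @ snd cj @ snd dj @ snd sj"
    and bcj: "fst (source cj) = qS" and bdj: "fst (target M cj) = qT" and dj_n: "snd (source dj) > n"
    and uj_n: "snd (target M uj) > n"
    using dj unfolding good_normal_decomp_def Let_def is_concat_def rj_def qS_def qT_def n_def by auto
  have pj_p: "is_path M pj" "fst pj = fst rj" and uj_p: "is_path M uj" "fst uj = target M pj"
    and cj_p: "is_path M cj" "fst cj = target M uj" and dj_p: "is_path M dj" "fst dj = target M cj"
    and sj_p: "is_path M sj" "fst sj = target M dj" using cj by auto
  have run_pu: "run M (fst rj) (snd pj @ snd uj) = Some (target M uj)"
    using run_app_Some[OF path_run[OF pj_p(1)], of "snd uj"] path_run[OF uj_p(1)] pj_p(2) uj_p(2) by simp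
  have run_puc: "run M (fst rj) ((snd pj @ snd uj) @ snd cj) = Some (target M cj)"
    using run_app_Some[OF run_pu, of "snd cj"] path_run[OF cj_p(1)] cj_p(2) by simp
  have run_ds: "run M (target M cj) (snd dj @ snd sj) = Some (target M sj)"
    using run_app_Some[OF path_run[OF dj_p(1)], of "snd sj"] path_run[OF sj_p(1)] dj_p(2) sj_p(2) by simp
  have srj': "snd rj = ((snd pj @ snd uj) @ snd cj) @ (snd dj @ snd sj)" using srj by simp
  have run_rj: "run M (fst rj) (snd rj) = Some (target M sj)"
    using run_app_Some[OF run_puc, of "snd dj @ snd sj"] run_ds srj' by simp
  have trj: "target M rj = target M sj" using run_rj unfolding target_def by simp
  have V_n: "snd (target M cj) > n" using dj_n dj_p unfolding source_def by simp
  have tlpos: "\<forall>x\<in>set (tl (confs M (fst rj) ((snd pj @ snd uj) @ snd cj))). snd x > 0"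
    apply (rule Z_prefix[OF arcj _ run_puc]) using srj' V_n by auto
  have Zpuc: "Z M (fst rj) ((snd pj @ snd uj) @ snd cj) = 0" using Z_zero_tl[OF tlpos] .
  have Zrj: "Z M (fst rj) (snd rj) = Z M (target M cj) (snd dj @ snd sj)"
    using Z_append[OF run_puc, of "snd dj @ snd sj"] srj' Zpuc by simp
  have cappos: "\<forall>x\<in>set (confs M (fst cj) (snd cj)). snd x > 0"
  proof -
    have "tl (confs M (fst rj) ((snd pj @ snd uj) @ snd cj)) =
          tl (confs M (fst rj) (snd pj @ snd uj)) @ tl (confs M (target M uj) (snd cj))"
      using confs_append[OF run_pu] by (metis tl_append2 confs_ne)
    then have "\<forall>x\<in>set (tl (confs M (fst cj) (snd cj))). snd x > 0" using tlpos cj_p by auto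
    moreover have "snd (fst cj) > 0" using uj_n cj_p by simp
    ultimately show ?thesis by (subst confs_hd) auto
  qed
  have fcj: "fst cj = (qS, snd (target M uj))" using bcj cj_p(2) unfolding source_def by (metis prod.collapse)
  have tcj: "target M cj = (qT, snd (target M cj))" using bdj by (metis prod.collapse)
  define d1 where "d1 = snd (target M ui)"
  define d2 where "d2 = snd (target M uj)"
  define V where "V = snd (target M cj)"
  obtain x y :: nat where xy: "int x * A - int y * B = int d2 - int d1" and xl: "int d2 \<le> int x"
    using bez[OF A0 B0 md[folded A_def B_def], of "int d2"] unfolding d1_def d2_def by blast
  define X where "X = concat (replicate x (sp S))"
  have "\<forall>k\<le>x. int d1 + int k * eff (sp S) > int (card (states M))"
  proof (intro allI impI)
    fix k
    have "0 \<le> int k * eff (sp S)" using A0 unfolding A_def by simp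
    then show "int d1 + int k * eff (sp S) > int (card (states M))"
      using ui_n unfolding d1_def n_def by linarith
  qed
  then have rX: "run M (qS, d1) X = Some (qS, nat (int d1 + int x * A))"
    and pX: "\<forall>x\<in>set (confs M (qS, d1) X). snd x > 0"
    using cyc_iter[OF wf scS qS_def[symmetric]] unfolding X_def A_def by auto
  define c2 where "c2 = nat (int d1 + int x * A)"
  have xA: "int x * A \<ge> int x" using A0 by (simp add: mult_le_cancel_left1)
  have ic2: "int c2 = int d1 + int x * A" unfolding c2_def using xA by simp
  define \<delta> where "\<delta> = c2 - d2"
  have id: "int \<delta> = int y * B" unfolding \<delta>_def using ic2 xy xl xA by simp
  have d2d: "d2 + \<delta> = c2" unfolding \<delta>_def using ic2 xl xA by simp
  have rc: "run M (fst (fst cj), snd (fst cj) + \<delta>) (snd cj) = Some (fst (target M cj), snd (target M cj) + \<delta>)"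
    and pc: "\<forall>x\<in>set (confs M (fst (fst cj), snd (fst cj) + \<delta>) (snd cj)). snd x > 0"
    using run_shift[OF wf path_run[OF cj_p(1)] cappos] by auto
  have rc': "run M (qS, c2) (snd cj) = Some (qT, V + \<delta>)"
    and pc': "\<forall>x\<in>set (confs M (qS, c2) (snd cj)). snd x > 0"
    using rc pc fcj bdj d2d unfolding d2_def V_def by auto
  define Y where "Y = concat (replicate y (sn T))"
  have "\<forall>k\<le>y. int (V + \<delta>) + int k * eff (sn T) > int (card (states M))"
  proof (intro allI impI)
    fix k assume "k \<le> y"
    then have "int k * B \<le> int y * B" using B0 by (simp add: mult_right_mono)
    then show "int (V + \<delta>) + int k * eff (sn T) > int (card (states M))"
      using V_n id unfolding V_def B_def n_def by simp
  qed
  note hy = this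
  have "run M (qT, V + \<delta>) Y = Some (qT, nat (int (V + \<delta>) + int y * eff (sn T)))
    \<and> (\<forall>x\<in>set (confs M (qT, V + \<delta>) Y). snd x > 0)"
    using cyc_iter[OF wf scT qT_def[symmetric] hy] unfolding Y_def .
  then have rY: "run M (qT, V + \<delta>) Y = Some (qT, nat (int (V + \<delta>) + int y * eff (sn T)))"
    and pY: "\<forall>x\<in>set (confs M (qT, V + \<delta>) Y). snd x > 0" by auto
  have "nat (int (V + \<delta>) + int y * eff (sn T)) = V" using id unfolding B_def by simp
  then have rY': "run M (qT, V + \<delta>) Y = Some (target M cj)" using rY tcj unfolding V_def by simp
  define New where "New = (snd pi @ snd ui) @ X @ snd cj @ Y @ (snd dj @ snd sj)"
  have tui': "target M ui = (qS, d1)" using tui unfolding d1_def .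
  have run_new: "run M (fst ri) New = Some (target M rj)"
  proof -
    have "run M (fst ri) New = run M (qS, d1) (X @ snd cj @ Y @ (snd dj @ snd sj))"
      unfolding New_def using run_app_Some[OF run_pui] tui' by simp
    also have "\<dots> = run M (qS, c2) (snd cj @ Y @ (snd dj @ snd sj))"
      using run_app_Some[OF rX] unfolding c2_def by simp
    also have "\<dots> = run M (qT, V + \<delta>) (Y @ (snd dj @ snd sj))"
      using run_app_Some[OF rc'] by simp
    also have "\<dots> = run M (target M cj) (snd dj @ snd sj)"
      using run_app_Some[OF rY'] by simp
    finally show ?thesis using run_ds trj by simp
  qed
  have Znew: "Z M (fst ri) New = Z M (fst rj) (snd rj)"
  proof -
    have "Z M (fst ri) New = Z M (fst ri) (snd pi @ snd ui) + Z M (qS, d1) X + Z M (qS, c2) (snd cj)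
       + Z M (qT, V + \<delta>) Y + Z M (target M cj) (snd dj @ snd sj)"
      unfolding New_def using Z_append[OF run_pui] Z_append[OF rX[folded c2_def]] Z_append[OF rc']
        Z_append[OF rY'] tui' by simp
    then show ?thesis using Zpui Z_zero[OF pX] Z_zero[OF pc'] Z_zero[OF pY] Zrj by simp
  qed
  define R1 where "R1 = take i rs"
  define R2 where "R2 = take (j - Suc i) (drop (Suc i) rs)"
  define R3 where "R3 = drop (Suc j) rs"
  have rsd: "rs = R1 @ ri # R2 @ rj # R3" unfolding R1_def R2_def R3_def ri_def rj_def
    using split2[OF ij(1) jl] .
  have ch: "chain M \<alpha> rs" and s\<rho>: "snd \<rho> = concat (map snd rs)"
    using cc srcr unfolding is_concat_def source_def by auto
  have ch1: "chain M \<alpha> R1" and fri: "fst ri = cend M \<alpha> R1" and ch2: "chain M (target M ri) R2"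
    and frj: "fst rj = cend M (target M ri) R2" and ch3: "chain M (target M rj) R3"
    using ch unfolding rsd by (auto simp: chain_app)
  define P where "P = concat (map snd R1)"
  define P2 where "P2 = concat (map snd R2)"
  define Q where "Q = concat (map snd R3)"
  have rP: "run M \<alpha> P = Some (fst ri)" using chain_run[OF ch1] fri unfolding P_def by simp
  have rP2: "run M (target M ri) P2 = Some (fst rj)" using chain_run[OF ch2] frj unfolding P2_def by simp
  have rQ: "run M (target M rj) Q = Some (cend M (target M rj) R3)" using chain_run[OF ch3] unfolding Q_def .
  have run_ri': "run M (fst ri) (snd ri) = Some (target M ri)" using run_ri tri by simp
  have run_rj': "run M (fst rj) (snd rj) = Some (target M rj)" using run_rj trj by simp
  have s\<rho>': "snd \<rho> = P @ snd ri @ P2 @ snd rj @ Q" unfolding s\<rho> P_def P2_def Q_def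
    by (subst rsd) simp
  have "run M \<alpha> (snd \<rho>) = Some (cend M (target M rj) R3)"
    unfolding s\<rho>' using run_app_Some[OF rP] run_app_Some[OF run_ri'] run_app_Some[OF rP2]
      run_app_Some[OF run_rj'] rQ by simp
  then have \<beta>def: "\<beta> = cend M (target M rj) R3" using tgtr srcr unfolding target_def source_def by simp
  define \<rho>' where "\<rho>' = (\<alpha>, P @ New @ Q)"
  have r\<rho>': "run M \<alpha> (P @ New @ Q) = Some \<beta>" using run_app_Some[OF rP] run_app_Some[OF run_new] rQ \<beta>def by simp
  have "zeros M \<rho> \<le> zeros M \<rho>'"
    apply (rule mini) using r\<rho>' unfolding \<rho>'_def is_path_def source_def target_def by auto
  moreover have "zeros M \<rho> = (if snd \<alpha> = 0 then 1 else 0) + Z M \<alpha> (snd \<rho>)"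
    using zeros_Z[of M \<alpha> "snd \<rho>"] srcr unfolding source_def by (metis prod.collapse)
  moreover have "zeros M \<rho>' = (if snd \<alpha> = 0 then 1 else 0) + Z M \<alpha> (P @ New @ Q)"
    unfolding \<rho>'_def by (rule zeros_Z)
  moreover have "Z M \<alpha> (snd \<rho>) = Z M \<alpha> P + Z M (fst ri) (snd ri) + Z M (target M ri) P2
     + Z M (fst rj) (snd rj) + Z M (target M rj) Q"
    unfolding s\<rho>' using Z_append[OF rP] Z_append[OF run_ri'] Z_append[OF rP2] Z_append[OF run_rj']
      run_app_Some[OF rP] run_app_Some[OF run_ri'] run_app_Some[OF rP2] by simp
  moreover have "Z M \<alpha> (P @ New @ Q) = Z M \<alpha> P + Z M (fst ri) New + Z M (target M rj) Q"
    using Z_append[OF rP] Z_append[OF run_new] run_app_Some[OF rP] by simp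
  ultimately show False using Znew Zri by simp
qed


lemma core_sym:
  assumes st: "standing_setup M sp sn \<alpha> \<beta> \<rho> rs L N Si Ti"
  and ij: "i \<noteq> j" "i \<in> N" "j \<in> N" "Si i = S" "Si j = S" "Ti i = T" "Ti j = T"
  and di: "good_normal_decomp M sp sn S T (rs!i) pi ui ci di si ai bi"
  and dj: "good_normal_decomp M sp sn S T (rs!j) pj uj cj dj sj aj bj"
  and md: "gcd (eff (sp S)) (- eff (sn T)) dvd (int (snd (target M uj)) - int (snd (target M ui)))"
  shows False
proof (cases "i < j")
  case True
  show ?thesis by (rule core[OF st True ij(2-7) di dj md])
next
  case False
  then have "j < i" using ij(1) by simp
  moreover have "gcd (eff (sp S)) (- eff (sn T)) dvd (int (snd (target M ui)) - int (snd (target M uj)))"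
    using md by (metis dvd_minus_iff minus_diff_eq)
  ultimately show ?thesis using core[OF st _ ij(3) ij(2) ij(5) ij(4) ij(7) ij(6) dj di] by blast
qed

theorem lemma5:
  fixes M :: "'q ocs"
  assumes "standing_setup M sp sn \<alpha> \<beta> \<rho> rs L N Si Ti"
    and "S \<in> sccs M" and "T \<in> sccs M"
    and "{i \<in> N. Si i = S \<and> Ti i = T} \<noteq> {}"
  shows "int (card {i \<in> N. Si i = S \<and> Ti i = T}) \<le> gcd (eff (sp S)) (- eff (sn T))"
proof (rule ccontr)
  define I where "I = {i \<in> N. Si i = S \<and> Ti i = T}"
  define g where "g = gcd (eff (sp S)) (- eff (sn T))"
  assume "\<not> int (card {i \<in> N. Si i = S \<and> Ti i = T}) \<le> gcd (eff (sp S)) (- eff (sn T))"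
  then have big: "int (card I) > g" unfolding I_def g_def by simp
  have st: "standing_setup M sp sn \<alpha> \<beta> \<rho> rs L N Si Ti" by fact
  have LN: "L \<union> N = {..<length rs}" and fc: "fixed_cycles M sp sn"
    and gna: "\<And>k. k \<in> N \<Longrightarrow> good_normal_arc M sp sn (Si k) (Ti k) (rs ! k)"
    using st unfolding standing_setup_def by auto
  have "I \<subseteq> {..<length rs}" using LN unfolding I_def by auto
  then have finI: "finite I" using finite_subset by blast
  obtain i0 where i0: "i0 \<in> I" using assms(4) unfolding I_def by blast
  have "good_normal_arc M sp sn S T (rs ! i0)" using gna i0 unfolding I_def by auto
  then have "pos_enabled M S" unfolding good_normal_arc_def by auto
  then have "eff (sp S) > 0" using fc assms(2) unfolding fixed_cycles_def by auto
  then have g0: "g > 0" unfolding g_def by simp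
  have "\<forall>i\<in>I. \<exists>p. case p of (pre,up,cap,down,suf,a,b) \<Rightarrow> good_normal_decomp M sp sn S T (rs!i) pre up cap down suf a b"
  proof
    fix i assume "i \<in> I"
    then have "good_normal_arc M sp sn S T (rs ! i)" using gna unfolding I_def by auto
    then obtain pre up cap down suf a b where "good_normal_decomp M sp sn S T (rs!i) pre up cap down suf a b"
      unfolding good_normal_arc_def by blast
    then show "\<exists>p. case p of (pre,up,cap,down,suf,a,b) \<Rightarrow> good_normal_decomp M sp sn S T (rs!i) pre up cap down suf a b"
      by (intro exI[of _ "(pre,up,cap,down,suf,a,b)"]) simp
  qed
  note ex = this
  obtain F where F: "\<forall>i\<in>I. case F i of (pre,up,cap,down,suf,a,b) \<Rightarrow> good_normal_decomp M sp sn S T (rs!i) pre up cap down suf a b"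
    using bchoice[OF ex] by blast
  define h where "h i = int (snd (target M (fst (snd (F i))))) mod g" for i
  have "h ` I \<subseteq> {0..<g}" unfolding h_def using g0 by auto
  then have "card (h ` I) \<le> card {0..<g}" by (intro card_mono) auto
  moreover have "card {0..<g} = nat g" by (metis card_atLeastLessThan_int diff_zero)
  ultimately have "int (card (h ` I)) \<le> int (nat g)" by (metis of_nat_le_iff)
  then have "int (card (h ` I)) \<le> g" using g0 by linarith
  have "\<not> inj_on h I"
  proof
    assume "inj_on h I"
    then have "card (h ` I) = card I" by (rule card_image)
    then show False using big \<open>int (card (h ` I)) \<le> g\<close> by linarith
  qed
  then obtain i j where ij: "i \<in> I" "j \<in> I" "i \<noteq> j" "h i = h j" unfolding inj_on_def by blast
  obtain pi ui ci di si ai bi where Fi: "F i = (pi,ui,ci,di,si,ai,bi)" by (rule prod_cases7)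
  obtain pj uj cj dj sj aj bj where Fj: "F j = (pj,uj,cj,dj,sj,aj,bj)" by (rule prod_cases7)
  have di: "good_normal_decomp M sp sn S T (rs!i) pi ui ci di si ai bi" 
  proof -
    have "case F i of (pre,up,cap,down,suf,a,b) \<Rightarrow> good_normal_decomp M sp sn S T (rs!i) pre up cap down suf a b"
      by (rule bspec[OF F ij(1)])
    then show ?thesis unfolding Fi by simp
  qed
  have dj: "good_normal_decomp M sp sn S T (rs!j) pj uj cj dj sj aj bj" 
  proof -
    have "case F j of (pre,up,cap,down,suf,a,b) \<Rightarrow> good_normal_decomp M sp sn S T (rs!j) pre up cap down suf a b"
      by (rule bspec[OF F ij(2)])
    then show ?thesis unfolding Fj by simp
  qed
  have "int (snd (target M uj)) mod g = int (snd (target M ui)) mod g" using ij(4) Fi Fj unfolding h_def by simp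
  then have md: "g dvd (int (snd (target M uj)) - int (snd (target M ui)))" by (simp add: mod_eq_dvd_iff)
  have iN: "i \<in> N" "Si i = S" "Ti i = T" using ij(1) unfolding I_def by auto
  have jN: "j \<in> N" "Si j = S" "Ti j = T" using ij(2) unfolding I_def by auto
  show False by (rule core_sym[OF st ij(3) iN(1) jN(1) iN(2) jN(2) iN(3) jN(3) di dj md[unfolded g_def]])
qed

end
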